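(* Let $(x_1,\dots,x_n)$ be uniformly distributed on $\{x\in\{0,1\}^n:\sum_{j=1}^n x_j=s\}$, let $p=s/n$, let $a_1,\dots,a_n\in\mathbb{R}$, and let $t\in\mathbb{R}$ satisfy $|(a_j-a_k)t|\le\pi$ for all $1\le j,k\le n$. Then \[\Big|\mathbb{E}\big[e^{it\sum_{j=1}^n a_jx_j}\big]\Big|\le(n+1)\exp\big[-2p(1-p)t^2\operatorname{Var}[a_J]\,n/\pi^2\big],\] where $\operatorname{Var}[a_J]$ is the variance of $a_J$ for $J$ uniform on $[n]$. *)

theory Defs
  imports "HOL-Probability.Probability"
begin

definition slice :: "nat \<Rightarrow> nat \<Rightarrow> (nat \<Rightarrow> nat) set" where
  "slice n s = {x \<in> PiE {1..n} (\<lambda>_. {0, 1}). (\<Sum>j=1..n. x j) = s}"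

end

theory Submission
  imports Defs
begin


lemma jordan_ineq:
  fixes x :: real assumes "0 \<le> x" "x \<le> pi/2"
  shows "2 * x / pi \<le> sin x"
proof -
  have cv: "convex_on {0..pi/2} (\<lambda>x. - sin x)"
  proof (rule f''_ge0_imp_convex[where f'="\<lambda>x. - cos x" and f''="\<lambda>x. sin x"])
    show "convex {0..pi/2}" by simp
    show "((\<lambda>x. - sin x) has_real_derivative - cos x) (at x)" for x
      by (auto intro!: derivative_eq_intros)
    show "((\<lambda>x. - cos x) has_real_derivative sin x) (at x)" for x
      by (auto intro!: derivative_eq_intros)
    show "x \<in> {0..pi/2} \<Longrightarrow> 0 \<le> sin x" for x
      by (auto intro!: sin_ge_zero)
  qed
  define u where "u = 2 * x / pi"
  have u: "0 \<le> u" "u \<le> 1" using assms pi_gt_zero by (auto simp: u_def field_simps)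
  have "- sin ((1 - u) *\<^sub>R 0 + u *\<^sub>R (pi/2)) \<le> (1 - u) * (- sin 0) + u * (- sin (pi/2))"
    using convex_onD[OF cv, of u 0 "pi/2"] u by auto
  moreover have "(1 - u) *\<^sub>R 0 + u *\<^sub>R (pi/2) = x" by (simp add: u_def)
  ultimately show ?thesis by (simp add: u_def)
qed

lemma one_minus_cos_ge:
  fixes x :: real assumes "\<bar>x\<bar> \<le> pi"
  shows "2 * x\<^sup>2 / pi\<^sup>2 \<le> 1 - cos x"
proof -
  have c: "cos x = 1 - 2 * (sin (\<bar>x\<bar>/2))\<^sup>2"
    using cos_double_sin[of "\<bar>x\<bar>/2"] by (cases "x \<ge> 0") auto
  have j: "2 * (\<bar>x\<bar>/2) / pi \<le> sin (\<bar>x\<bar>/2)"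
    by (rule jordan_ineq) (use assms in auto)
  have "\<bar>x\<bar> / pi \<le> sin (\<bar>x\<bar>/2)" using j by simp
  moreover have "0 \<le> \<bar>x\<bar> / pi" by simp
  ultimately have "(\<bar>x\<bar> / pi)\<^sup>2 \<le> (sin (\<bar>x\<bar>/2))\<^sup>2" by (rule power_mono)
  then have "x\<^sup>2 / pi\<^sup>2 \<le> (sin (\<bar>x\<bar>/2))\<^sup>2" by (simp add: power_divide)
  then show ?thesis using c by simp
qed



lemma cos_sum_bound:
  fixes I :: "nat set" and b :: "nat \<Rightarrow> real"
  assumes fin: "finite I" and ne: "I \<noteq> {}"
    and bd: "\<And>j k. j \<in> I \<Longrightarrow> k \<in> I \<Longrightarrow> \<bar>b j - b k\<bar> \<le> pi"
  shows "(\<Sum>j\<in>I. \<Sum>k\<in>I. (b j - b k)\<^sup>2) / (real (card I) * pi\<^sup>2) \<le> (\<Sum>j\<in>I. 1 - cos (b j))"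
proof -
  define N where "N = real (card I)"
  define C where "C = (\<Sum>j\<in>I. cos (b j))"
  define D where "D = (\<Sum>j\<in>I. sin (b j))"
  define Q where "Q = (\<Sum>j\<in>I. \<Sum>k\<in>I. (b j - b k)\<^sup>2)"
  have Npos: "N > 0" using fin ne by (simp add: N_def card_gt_0_iff)
  have h1: "C\<^sup>2 + D\<^sup>2 = (\<Sum>j\<in>I. \<Sum>k\<in>I. cos (b j - b k))"
    by (simp add: C_def D_def power2_eq_square sum_product cos_diff sum.distrib[symmetric])
  have h2: "(\<Sum>j\<in>I. \<Sum>k\<in>I. 2 * (b j - b k)\<^sup>2 / pi\<^sup>2) \<le> (\<Sum>j\<in>I. \<Sum>k\<in>I. 1 - cos (b j - b k))"
    by (intro sum_mono one_minus_cos_ge bd)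
  have h3: "(\<Sum>j\<in>I. \<Sum>k\<in>I. 2 * (b j - b k)\<^sup>2 / pi\<^sup>2) = 2 * Q / pi\<^sup>2"
    by (simp add: Q_def sum_divide_distrib sum_distrib_left)
  have h4: "(\<Sum>j\<in>I. \<Sum>k\<in>I. 1 - cos (b j - b k)) = N\<^sup>2 - (C\<^sup>2 + D\<^sup>2)"
    by (simp only: h1 sum_subtractf) (simp add: N_def power2_eq_square)
  define X where "X = N\<^sup>2 - C\<^sup>2 - D\<^sup>2"
  have QX: "2 * Q / pi\<^sup>2 \<le> X" using h2 h3 h4 by (simp add: X_def)
  have CN: "C \<le> N" unfolding C_def N_def
    using sum_mono[of I "\<lambda>j. cos (b j)" "\<lambda>_. 1"] by simp
  have X2: "X \<le> 2 * N * (N - C)"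
  proof (cases "C \<le> 0")
    case True
    have "X \<le> N\<^sup>2" by (simp add: X_def)
    also have "\<dots> \<le> 2 * N * (N - C)" using True Npos by (simp add: power2_eq_square algebra_simps)
    finally show ?thesis .
  next
    case False
    have "X \<le> N\<^sup>2 - C\<^sup>2" by (simp add: X_def)
    also have "\<dots> = (N - C) * (N + C)" by (simp add: power2_eq_square algebra_simps)
    also have "\<dots> \<le> (N - C) * (2 * N)" using False CN by (intro mult_left_mono) auto
    finally show ?thesis by (simp add: algebra_simps)
  qed
  have "Q / (N * pi\<^sup>2) = (2 * Q / pi\<^sup>2) / (2 * N)" using Npos by (simp add: field_simps)
  also have "\<dots> \<le> X / (2 * N)" using QX Npos by (intro divide_right_mono) auto
  also have "\<dots> \<le> N - C" using X2 Npos by (simp add: field_simps)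
  also have "N - C = (\<Sum>j\<in>I. 1 - cos (b j))" by (simp add: N_def C_def sum_subtractf)
  finally show ?thesis by (simp add: Q_def N_def)
qed



lemma factor_bound:
  fixes p phi :: real assumes "0 \<le> p" "p \<le> 1"
  shows "cmod (complex_of_real (1 - p) + complex_of_real p * cis phi) \<le> exp (- (p * (1 - p)) * (1 - cos phi))"
proof -
  define q where "q = 1 - p"
  have "(cmod (complex_of_real q + complex_of_real p * cis phi))\<^sup>2 = (q + p * cos phi)\<^sup>2 + (p * sin phi)\<^sup>2"
    by (simp only: cmod_power2 Re_complex_of_real) simp
  also have "\<dots> = q\<^sup>2 + 2*p*q*cos phi + p\<^sup>2*((sin phi)\<^sup>2 + (cos phi)\<^sup>2)"
    by algebra
  also have "\<dots> = 1 - 2 * (p * q) * (1 - cos phi)"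
    by (simp add: q_def power2_eq_square algebra_simps)
  also have "\<dots> \<le> exp (- 2 * (p * q) * (1 - cos phi))"
    using exp_ge_add_one_self[of "- 2 * (p * q) * (1 - cos phi)"] by simp
  also have "\<dots> = (exp (- (p * q) * (1 - cos phi)))\<^sup>2"
    by (simp add: power2_eq_square exp_add[symmetric])
  finally have "(cmod (complex_of_real q + complex_of_real p * cis phi))\<^sup>2 \<le> (exp (- (p * q) * (1 - cos phi)))\<^sup>2" .
  then show ?thesis unfolding q_def by (rule power2_le_imp_le) simp
qed

lemma prod_bound:
  fixes p :: real and phi :: "nat \<Rightarrow> real" assumes "0 \<le> p" "p \<le> 1" "finite I"
  shows "cmod (\<Prod>j\<in>I. complex_of_real (1 - p) + complex_of_real p * cis (phi j))
     \<le> exp (- (p * (1 - p)) * (\<Sum>j\<in>I. 1 - cos (phi j)))"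
proof -
  have "cmod (\<Prod>j\<in>I. complex_of_real (1 - p) + complex_of_real p * cis (phi j))
     = (\<Prod>j\<in>I. cmod (complex_of_real (1 - p) + complex_of_real p * cis (phi j)))"
    by (simp add: prod_norm)
  also have "\<dots> \<le> (\<Prod>j\<in>I. exp (- (p * (1 - p)) * (1 - cos (phi j))))"
    by (intro prod_mono conjI factor_bound assms) auto
  also have "\<dots> = exp (\<Sum>j\<in>I. - (p * (1 - p)) * (1 - cos (phi j)))"
    by (rule exp_sum[OF assms(3), symmetric])
  also have "\<dots> = exp (- (p * (1 - p)) * (\<Sum>j\<in>I. 1 - cos (phi j)))"
    by (simp add: sum_distrib_left)
  finally show ?thesis .
qed

lemma roots_sum:
  fixes d :: int and n :: nat assumes "\<bar>d\<bar> \<le> int n"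
  shows "(\<Sum>m\<in>{0..n}. cis (2 * pi * real m * real_of_int d / real (Suc n))) = (if d = 0 then of_nat (Suc n) else 0)"
proof (cases "d = 0")
  case True then show ?thesis by simp
next
  case False
  define z where "z = cis (2 * pi * real_of_int d / real (Suc n))"
  have zm: "cis (2 * pi * real m * real_of_int d / real (Suc n)) = z ^ m" for m
    by (simp add: z_def Complex.DeMoivre mult_ac)
  have zn: "z ^ Suc n = 1"
  proof -
    have "z ^ Suc n = cis (real (Suc n) * (2 * pi * real_of_int d / real (Suc n)))"
      by (simp only: z_def Complex.DeMoivre)
    also have "\<dots> = cis (2 * pi * real_of_int d)"
      by (simp del: of_nat_Suc)
    also have "\<dots> = 1" by simp
    finally show ?thesis .
  qed
  have z1: "z \<noteq> 1"
  proof
    assume "z = 1"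
    then have "cos (2 * pi * real_of_int d / real (Suc n)) = 1"
      unfolding z_def by (metis cis.simps(1) one_complex.simps(1))
    then obtain k :: int where k: "2 * pi * real_of_int d / real (Suc n) = k * 2 * pi"
      by (auto simp: cos_one_2pi_int)
    then have "real_of_int d = real_of_int k * real (Suc n)"
      by (simp add: field_simps del: of_nat_Suc)
    then have dk: "d = k * int (Suc n)" by (metis of_int_eq_iff of_int_mult of_int_of_nat_eq)
    with False have "k \<noteq> 0" by auto
    then have "\<bar>k * int (Suc n)\<bar> \<ge> int (Suc n)"
      by (simp add: abs_mult)
    with dk assms show False by simp
  qed
  have "(\<Sum>m\<in>{0..n}. cis (2 * pi * real m * real_of_int d / real (Suc n))) = (\<Sum>m<Suc n. z ^ m)"
    by (simp only: zm atLeast0AtMost lessThan_Suc_atMost)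
  also have "\<dots> = 0" using geometric_sum[OF z1, of "Suc n"] zn by simp
  finally show ?thesis using False by simp
qed

lemma prod_cis: "finite A \<Longrightarrow> (\<Prod>j\<in>A. cis (f j)) = cis (\<Sum>j\<in>A. f j)"
  by (induction A rule: finite_induct) (auto simp: cis_mult)

lemma expand:
  fixes p :: real and a :: "nat \<Rightarrow> real" assumes "finite I"
  shows "(\<Prod>j\<in>I. complex_of_real (1 - p) + complex_of_real p * cis (t * a j + th))
    = (\<Sum>A\<in>Pow I. complex_of_real (p ^ card A * (1 - p) ^ (card I - card A))
          * cis (t * (\<Sum>j\<in>A. a j)) * cis (th * real (card A)))"
proof -
  have "(\<Prod>j\<in>I. complex_of_real (1 - p) + complex_of_real p * cis (t * a j + th))
     = (\<Prod>j\<in>I. complex_of_real p * cis (t * a j + th) + complex_of_real (1 - p))"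
    by (simp add: add.commute)
  also have "\<dots> = (\<Sum>A\<in>Pow I. (\<Prod>j\<in>A. complex_of_real p * cis (t * a j + th)) * (\<Prod>j\<in>I - A. complex_of_real (1 - p)))"
    by (rule prod_add[OF assms])
  also have "\<dots> = (\<Sum>A\<in>Pow I. complex_of_real (p ^ card A * (1 - p) ^ (card I - card A))
          * cis (t * (\<Sum>j\<in>A. a j)) * cis (th * real (card A)))"
  proof (rule sum.cong[OF refl])
    fix A assume A: "A \<in> Pow I"
    then have fA: "finite A" using assms finite_subset by auto
    have "(\<Prod>j\<in>A. complex_of_real p * cis (t * a j + th)) = complex_of_real p ^ card A * cis (\<Sum>j\<in>A. t * a j + th)"
      by (simp add: prod.distrib prod_cis[OF fA])
    also have "(\<Sum>j\<in>A. t * a j + th) = t * (\<Sum>j\<in>A. a j) + th * real (card A)"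
      by (simp add: sum.distrib sum_distrib_left)
    finally have 1: "(\<Prod>j\<in>A. complex_of_real p * cis (t * a j + th)) = complex_of_real p ^ card A * (cis (t * (\<Sum>j\<in>A. a j)) * cis (th * real (card A)))"
      by (simp add: cis_mult)
    have 2: "(\<Prod>j\<in>I - A. complex_of_real (1 - p)) = complex_of_real (1 - p) ^ (card I - card A)"
      using A fA by (simp add: card_Diff_subset)
    show "(\<Prod>j\<in>A. complex_of_real p * cis (t * a j + th)) * (\<Prod>j\<in>I - A. complex_of_real (1 - p)) =
         complex_of_real (p ^ card A * (1 - p) ^ (card I - card A)) * cis (t * (\<Sum>j\<in>A. a j)) * cis (th * real (card A))"
      unfolding 1 2 by (simp add: mult_ac)
  qed
  finally show ?thesis .
qed



lemma fourier:
  fixes p t :: real and a :: "nat \<Rightarrow> real" and I :: "nat set" and n s :: nat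
  assumes fin: "finite I" and n: "n = card I" and s: "s \<le> n"
  shows "(\<Sum>m\<in>{0..n}. cis (- (2 * pi * real m / real (Suc n)) * real s) *
           (\<Prod>j\<in>I. complex_of_real (1 - p) + complex_of_real p * cis (t * a j + 2 * pi * real m / real (Suc n))))
       = of_nat (Suc n) * complex_of_real (p ^ s * (1 - p) ^ (n - s)) *
           (\<Sum>A\<in>{A. A \<subseteq> I \<and> card A = s}. cis (t * (\<Sum>j\<in>A. a j)))"
proof -
  define w where "w A = complex_of_real (p ^ card A * (1 - p) ^ (card I - card A)) * cis (t * (\<Sum>j\<in>A. a j))" for A
  have "(\<Sum>m\<in>{0..n}. cis (- (2 * pi * real m / real (Suc n)) * real s) *
           (\<Prod>j\<in>I. complex_of_real (1 - p) + complex_of_real p * cis (t * a j + 2 * pi * real m / real (Suc n))))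
      = (\<Sum>m\<in>{0..n}. \<Sum>A\<in>Pow I. w A * (cis (- (2 * pi * real m / real (Suc n)) * real s) * cis (2 * pi * real m / real (Suc n) * real (card A))))"
    by (rule sum.cong[OF refl], subst expand[OF fin], simp add: sum_distrib_left w_def mult_ac)
  also have "\<dots> = (\<Sum>A\<in>Pow I. w A * (\<Sum>m\<in>{0..n}. cis (2 * pi * real m * real_of_int (int (card A) - int s) / real (Suc n))))"
  proof -
    have key: "cis (- (2 * pi * real m / real (Suc n)) * real s) * cis (2 * pi * real m / real (Suc n) * real k)
        = cis (2 * pi * real m * real_of_int (int k - int s) / real (Suc n))" for m k
    proof -
      have "- (2 * pi * real m / real (Suc n)) * real s + 2 * pi * real m / real (Suc n) * real k
          = 2 * pi * real m * real_of_int (int k - int s) / real (Suc n)"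
        by (simp add: field_simps del: of_nat_Suc)
      then show ?thesis by (simp add: cis_mult)
    qed
    show ?thesis
      by (subst sum.swap) (simp only: sum_distrib_left key)
  qed
  also have "\<dots> = (\<Sum>A\<in>Pow I. if card A = s then w A * of_nat (Suc n) else 0)"
  proof (rule sum.cong[OF refl])
    fix A assume "A \<in> Pow I"
    then have "card A \<le> n" using fin n by (auto intro: card_mono)
    then have "\<bar>int (card A) - int s\<bar> \<le> int n" using s by auto
    from roots_sum[OF this] show "w A * (\<Sum>m\<in>{0..n}. cis (2 * pi * real m * real_of_int (int (card A) - int s) / real (Suc n))) =
         (if card A = s then w A * of_nat (Suc n) else 0)" by auto
  qed
  also have "\<dots> = (\<Sum>A\<in>{A. A \<subseteq> I \<and> card A = s}. w A * of_nat (Suc n))"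
    by (simp add: sum.If_cases fin Pow_def Collect_conj_eq[symmetric] Int_def)
  also have "\<dots> = of_nat (Suc n) * complex_of_real (p ^ s * (1 - p) ^ (n - s)) *
           (\<Sum>A\<in>{A. A \<subseteq> I \<and> card A = s}. cis (t * (\<Sum>j\<in>A. a j)))"
    by (simp add: w_def sum_distrib_left n mult_ac del: of_nat_Suc)
  finally show ?thesis .
qed



lemma up_ineq:
  fixes k s n :: nat assumes "k < s" "s \<le> n"
  shows "Suc k * (n - s) \<le> (n - k) * s"
proof -
  obtain d where d: "s = k + 1 + d" using less_imp_Suc_add[OF assms(1)] by auto
  obtain e where e: "n = s + e" using assms le_Suc_ex by blast
  have "n - s = e" "n - k = d + 1 + e" using d e by auto
  then show ?thesis using d by (simp add: algebra_simps)
qed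

lemma down_ineq:
  fixes k s n :: nat assumes "s \<le> k" "k < n"
  shows "(n - k) * s \<le> Suc k * (n - s)"
proof -
  obtain d where d: "k = s + d" using assms le_Suc_ex by blast
  obtain e where e: "n = k + 1 + e" using less_imp_Suc_add[OF assms(2)] by auto
  have "n - s = d + 1 + e" "n - k = 1 + e" using d e by auto
  then show ?thesis using d by (simp add: algebra_simps)
qed

lemma binom_rec:
  fixes n k s :: nat assumes "k < n"
  defines "f \<equiv> \<lambda>k. (n choose k) * s ^ k * (n - s) ^ (n - k)"
  shows "f (Suc k) * (Suc k * (n - s)) = f k * ((n - k) * s)"
proof -
  have c: "Suc k * (n choose Suc k) = (n - k) * (n choose k)"
    by (simp only: binomial_absorption binomial_absorb_comp)
  have e: "n - k = Suc (n - Suc k)" using assms by simp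
  have "f (Suc k) * (Suc k * (n - s)) = (Suc k * (n choose Suc k)) * s ^ k * s * (n - s) ^ (n - Suc k) * (n - s)"
    unfolding f_def by (simp only: power_Suc mult_ac)
  also have "\<dots> = (n - k) * (n choose k) * s ^ k * s * (n - s) ^ (n - k)"
    unfolding c by (simp add: e mult_ac)
  also have "\<dots> = f k * ((n - k) * s)" by (simp add: f_def mult_ac)
  finally show ?thesis .
qed

lemma binom_mode:
  fixes n s k :: nat assumes "s \<le> n" "k \<le> n"
  shows "(n choose k) * s ^ k * (n - s) ^ (n - k) \<le> (n choose s) * s ^ s * (n - s) ^ (n - s)"
proof -
  define f where "f \<equiv> \<lambda>k. (n choose k) * s ^ k * (n - s) ^ (n - k)"
  have rec: "f (Suc k) * (Suc k * (n - s)) = f k * ((n - k) * s)" if "k < n" for k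
    using binom_rec[OF that] by (simp add: f_def)
  have up: "f k \<le> f (Suc k)" if "k < s" for k
  proof (cases "s = n")
    case True
    then have "f k = 0" using that unfolding f_def by simp
    then show ?thesis by simp
  next
    case False
    then have pos: "Suc k * (n - s) > 0" using assms by simp
    have "f k * (Suc k * (n - s)) \<le> f k * ((n - k) * s)"
      using up_ineq[OF that assms(1)] by (intro mult_left_mono) auto
    also have "\<dots> = f (Suc k) * (Suc k * (n - s))" using rec[of k] that assms by simp
    finally show ?thesis using pos by (metis mult_le_cancel2)
  qed
  have down: "f (Suc k) \<le> f k" if "s \<le> k" "k < n" for k
  proof (cases "s = 0")
    case True
    then show ?thesis by (simp add: f_def)
  next
    case False
    then have pos: "(n - k) * s > 0" using that by simp
    have "f (Suc k) * ((n - k) * s) \<le> f (Suc k) * (Suc k * (n - s))"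
      using down_ineq[OF that] by (intro mult_left_mono) auto
    also have "\<dots> = f k * ((n - k) * s)" using rec[of k] that by simp
    finally show ?thesis using pos by (metis mult_le_cancel2)
  qed
  have A: "f k \<le> f s" if "k \<le> s" for k
    using that
  proof (induction "s - k" arbitrary: k)
    case 0 then show ?case by simp
  next
    case (Suc x)
    then have "k < s" by simp
    then have "f k \<le> f (Suc k)" by (rule up)
    also have "f (Suc k) \<le> f s" using Suc by simp
    finally show ?case .
  qed
  have B: "f k \<le> f s" if "s \<le> k" "k \<le> n" for k
    using that
  proof (induction "k - s" arbitrary: k)
    case 0 then show ?case by simp
  next
    case (Suc x)
    then obtain k' where k': "k = Suc k'" by (cases k) auto
    then have "s \<le> k'" "k' < n" using Suc by auto
    then have "f k \<le> f k'" using down k' by simp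
    also have "f k' \<le> f s" using Suc k' by simp
    finally show ?case .
  qed
  show ?thesis using A B assms by (cases "k \<le> s") (auto simp: f_def)
qed

lemma binom_mode_real:
  fixes n s :: nat assumes "s \<le> n" "n \<ge> 1"
  shows "1 / real (Suc n) \<le> real (n choose s) * (real s / real n) ^ s * (1 - real s / real n) ^ (n - s)"
proof -
  define F where "F = (n choose s) * s ^ s * (n - s) ^ (n - s)"
  have "n ^ n = (s + (n - s)) ^ n" using assms by simp
  also have "\<dots> = (\<Sum>k\<le>n. (n choose k) * s ^ k * (n - s) ^ (n - k))" using binomial_ring[of s "n-s" n] by simp
  also have "\<dots> \<le> (\<Sum>k\<le>n. F)" unfolding F_def by (intro sum_mono binom_mode assms) auto
  also have "\<dots> = Suc n * F" by simp
  finally have 1: "real n ^ n \<le> real (Suc n) * real F" by (metis of_nat_le_iff of_nat_mult of_nat_power)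
  have n0: "real n > 0" using assms by simp
  have 2: "1 - real s / real n = real (n - s) / real n" using assms n0 by (simp add: of_nat_diff field_simps)
  have "real (n choose s) * (real s / real n) ^ s * (1 - real s / real n) ^ (n - s) = real F / real n ^ n"
    unfolding 2 F_def using assms by (simp add: power_divide power_add[symmetric])
  moreover have "1 / real (Suc n) \<le> real F / real n ^ n"
    using 1 n0 by (simp add: field_simps del: of_nat_Suc)
  ultimately show ?thesis by simp
qed



lemma slice_sum:
  fixes g :: "(nat \<Rightarrow> nat) \<Rightarrow> 'b::comm_monoid_add"
  shows "(\<Sum>x\<in>slice n s. g x) = (\<Sum>A\<in>{A. A \<subseteq> {1..n} \<and> card A = s}.
            g (\<lambda>j. if j \<in> {1..n} then (if j \<in> A then 1 else 0) else undefined))"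
    and "card (slice n s) = n choose s"
proof -
  define I where "I = {1..n::nat}"
  define ind where "ind A = (\<lambda>j. if j \<in> I then (if j \<in> A then 1::nat else 0) else undefined)" for A :: "nat set"
  define inv where "inv x = {j \<in> I. x j = (1::nat)}" for x
  have fI: "finite I" by (simp add: I_def)
  have cnt: "(\<Sum>j\<in>I. ind A j) = card A" if "A \<subseteq> I" for A
  proof -
    have "(\<Sum>j\<in>I. ind A j) = (\<Sum>j\<in>I. if j \<in> A then 1 else 0)"
      by (rule sum.cong) (auto simp: ind_def)
    also have "\<dots> = card (I \<inter> A)" using fI by (simp add: sum.If_cases)
    also have "I \<inter> A = A" using that by auto
    finally show ?thesis .
  qed
  have bij: "bij_betw ind {A. A \<subseteq> I \<and> card A = s} (slice n s)"
  proof (rule bij_betw_byWitness[where f'=inv])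
    show "\<forall>A\<in>{A. A \<subseteq> I \<and> card A = s}. inv (ind A) = A"
      by (auto simp: inv_def ind_def)
    show "\<forall>x\<in>slice n s. ind (inv x) = x"
    proof
      fix x assume x: "x \<in> slice n s"
      then have xP: "x \<in> PiE I (\<lambda>_. {0, 1})" by (simp add: slice_def I_def)
      show "ind (inv x) = x"
      proof
        fix j show "ind (inv x) j = x j"
          using xP by (cases "j \<in> I") (auto simp: ind_def inv_def PiE_def extensional_def)
      qed
    qed
    show "ind ` {A. A \<subseteq> I \<and> card A = s} \<subseteq> slice n s"
    proof
      fix y assume "y \<in> ind ` {A. A \<subseteq> I \<and> card A = s}"
      then obtain A where A: "A \<subseteq> I" "card A = s" "y = ind A" by auto
      have "y \<in> PiE I (\<lambda>_. {0, 1})" using A by (auto simp: ind_def PiE_def extensional_def)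
      moreover have "(\<Sum>j=1..n. y j) = s" using cnt[OF A(1)] A by (simp add: I_def)
      ultimately show "y \<in> slice n s" by (simp add: slice_def I_def)
    qed
    show "inv ` slice n s \<subseteq> {A. A \<subseteq> I \<and> card A = s}"
    proof
      fix A assume "A \<in> inv ` slice n s"
      then obtain x where x: "x \<in> slice n s" "A = inv x" by auto
      then have xP: "x \<in> PiE I (\<lambda>_. {0, 1})" and xs: "(\<Sum>j\<in>I. x j) = s" by (auto simp: slice_def I_def)
      have AI: "A \<subseteq> I" using x by (auto simp: inv_def)
      have "ind A = x"
      proof
        fix j show "ind A j = x j"
          using xP x(2) by (cases "j \<in> I") (auto simp: ind_def inv_def PiE_def extensional_def)
      qed
      then have "card A = s" using cnt[OF AI] xs by simp
      with AI show "A \<in> {A. A \<subseteq> I \<and> card A = s}" by simp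
    qed
  qed
  show "(\<Sum>x\<in>slice n s. g x) = (\<Sum>A\<in>{A. A \<subseteq> {1..n} \<and> card A = s}.
            g (\<lambda>j. if j \<in> {1..n} then (if j \<in> A then 1 else 0) else undefined))"
    using sum.reindex_bij_betw[OF bij, of g] by (simp add: ind_def I_def)
  have "card (slice n s) = card {A. A \<subseteq> I \<and> card A = s}" using bij_betw_same_card[OF bij] by simp
  also have "\<dots> = n choose s" using n_subsets[OF fI, of s] by (simp add: I_def)
  finally show "card (slice n s) = n choose s" .
qed

lemma pair_var:
  fixes a :: "nat \<Rightarrow> real" assumes "finite I"
  defines "mu \<equiv> (\<Sum>j\<in>I. a j) / real (card I)"
  shows "(\<Sum>j\<in>I. \<Sum>k\<in>I. (a j - a k)\<^sup>2) = 2 * real (card I) * (\<Sum>j\<in>I. (a j - mu)\<^sup>2)"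
proof (cases "I = {}")
  case True then show ?thesis by simp
next
  case False
  define c where "c j = a j - mu" for j
  have c0: "(\<Sum>j\<in>I. c j) = 0"
  proof -
    have "(\<Sum>j\<in>I. c j) = (\<Sum>j\<in>I. a j) - real (card I) * mu" by (simp add: c_def sum_subtractf)
    also have "\<dots> = 0" using False assms(1) by (simp add: mu_def)
    finally show ?thesis .
  qed
  have "(\<Sum>j\<in>I. \<Sum>k\<in>I. (a j - a k)\<^sup>2) = (\<Sum>j\<in>I. \<Sum>k\<in>I. (c j)\<^sup>2 + (c k)\<^sup>2 - 2 * (c j * c k))"
    by (intro sum.cong refl) (simp add: c_def power2_eq_square algebra_simps)
  also have "\<dots> = 2 * real (card I) * (\<Sum>j\<in>I. (c j)\<^sup>2) - 2 * (\<Sum>j\<in>I. c j) * (\<Sum>k\<in>I. c k)"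
    by (simp add: sum_subtractf sum.distrib sum_distrib_left sum_distrib_right sum_product algebra_simps)
  also have "\<dots> = 2 * real (card I) * (\<Sum>j\<in>I. (a j - mu)\<^sup>2)" unfolding c0 by (simp add: c_def)
  finally show ?thesis .
qed



theorem lemma2p8:
  fixes n s :: nat and a :: "nat \<Rightarrow> real" and t :: real
  assumes "n \<ge> 1" and "s \<le> n"
    and "\<And>j k. j \<in> {1..n} \<Longrightarrow> k \<in> {1..n} \<Longrightarrow> \<bar>(a j - a k) * t\<bar> \<le> pi"
  shows "let p = real s / real n in
    cmod (measure_pmf.expectation (pmf_of_set (slice n s))
            (\<lambda>x. cis (t * (\<Sum>j=1..n. a j * real (x j)))))
    \<le> real (n + 1) * exp (- 2 * p * (1 - p) * t\<^sup>2
          * measure_pmf.variance (pmf_of_set {1..n}) a * real n / pi\<^sup>2)"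
proof -
  define p where "p = real s / real n"
  define I where "I = {1..n}"
  define \<A> where "\<A> = {A. A \<subseteq> I \<and> card A = s}"
  define \<Sigma> where "\<Sigma> = (\<Sum>A\<in>\<A>. cis (t * (\<Sum>j\<in>A. a j)))"
  define N where "N = n choose s"
  define P where "P = p ^ s * (1 - p) ^ (n - s)"
  define mu where "mu = (\<Sum>j\<in>I. a j) / real (card I)"
  define V where "V = (\<Sum>j\<in>I. (a j - mu)\<^sup>2)"
  have fI: "finite I" and cI: "card I = n" by (simp_all add: I_def)
  have n0: "real n > 0" using assms(1) by simp
  have p01: "0 \<le> p" "p \<le> 1" using assms n0 by (auto simp: p_def field_simps)
  have NP: "1 / real (Suc n) \<le> real N * P"
    using binom_mode_real[OF assms(2,1)] by (simp add: N_def P_def p_def)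
  have Ppos: "P > 0"
  proof -
    have "0 < real N * P" using NP by (rule less_le_trans[rotated]) simp
    moreover have "P \<ge> 0" using p01 by (simp add: P_def)
    ultimately show ?thesis by (cases "P = 0") auto
  qed
  have Npos: "N > 0" using assms(2) by (simp add: N_def)
  have cs: "card (slice n s) = N" using slice_sum(2) by (simp add: N_def)
  have sl_fin: "finite (slice n s)" and sl_ne: "slice n s \<noteq> {}"
    using cs Npos card_gt_0_iff by blast+
  have sumx: "(\<Sum>x\<in>slice n s. cis (t * (\<Sum>j=1..n. a j * real (x j)))) = \<Sigma>"
  proof -
    have "(\<Sum>x\<in>slice n s. cis (t * (\<Sum>j=1..n. a j * real (x j))))
       = (\<Sum>A\<in>\<A>. cis (t * (\<Sum>j=1..n. a j * real (if j \<in> {1..n} then (if j \<in> A then 1::nat else 0) else undefined))))"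
      unfolding slice_sum(1) by (simp add: \<A>_def I_def)
    also have "\<dots> = \<Sigma>"
      unfolding \<Sigma>_def
    proof (rule sum.cong[OF refl])
      fix A assume "A \<in> \<A>"
      then have AI: "A \<subseteq> {1..n}" by (simp add: \<A>_def I_def)
      have "(\<Sum>j=1..n. a j * real (if j \<in> {1..n} then (if j \<in> A then 1::nat else 0) else undefined))
          = (\<Sum>j\<in>{1..n}. if j \<in> A then a j else 0)"
        by (rule sum.cong) auto
      also have "\<dots> = (\<Sum>j\<in>A. a j)"
        using AI by (simp add: sum.If_cases Int_absorb1)
      finally show "cis (t * (\<Sum>j=1..n. a j * real (if j \<in> {1..n} then (if j \<in> A then 1::nat else 0) else undefined)))
          = cis (t * (\<Sum>j\<in>A. a j))" by simp
    qed
    finally show ?thesis .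
  qed
  have E: "measure_pmf.expectation (pmf_of_set (slice n s)) (\<lambda>x. cis (t * (\<Sum>j=1..n. a j * real (x j))))
      = \<Sigma> / of_nat N"
  proof -
    have "measure_pmf.expectation (pmf_of_set (slice n s)) (\<lambda>x. cis (t * (\<Sum>j=1..n. a j * real (x j))))
        = (\<Sum>x\<in>slice n s. pmf (pmf_of_set (slice n s)) x *\<^sub>R cis (t * (\<Sum>j=1..n. a j * real (x j))))"
      by (rule integral_measure_pmf[OF sl_fin]) (use sl_ne sl_fin in auto)
    also have "\<dots> = (\<Sum>x\<in>slice n s. (1 / real N) *\<^sub>R cis (t * (\<Sum>j=1..n. a j * real (x j))))"
      by (rule sum.cong[OF refl]) (use sl_ne sl_fin cs in auto)
    also have "\<dots> = (1 / real N) *\<^sub>R \<Sigma>" by (simp only: scaleR_sum_right[symmetric] sumx)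
    also have "\<dots> = \<Sigma> / of_nat N" by (simp add: scaleR_conv_of_real divide_inverse mult.commute)
    finally show ?thesis .
  qed
  have Ine: "I \<noteq> {}" using assms(1) by (auto simp: I_def)
  have Var: "measure_pmf.variance (pmf_of_set {1..n}) a = V / real n"
    using integral_pmf_of_set[OF Ine fI] cI unfolding I_def[symmetric]
    by (simp add: V_def mu_def)
  define th where "th m = 2 * pi * real m / real (Suc n)" for m
  define c where "c = 2 * p * (1 - p) * t\<^sup>2 * V / pi\<^sup>2"
  have prodb: "cmod (\<Prod>j\<in>I. complex_of_real (1 - p) + complex_of_real p * cis (t * a j + th m)) \<le> exp (- c)" for m
  proof -
    have "cmod (\<Prod>j\<in>I. complex_of_real (1 - p) + complex_of_real p * cis (t * a j + th m))
        \<le> exp (- (p * (1 - p)) * (\<Sum>j\<in>I. 1 - cos (t * a j + th m)))"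
      by (rule prod_bound[OF p01 fI])
    also have "\<dots> \<le> exp (- c)"
    proof -
      have bd: "\<bar>(t * a j + th m) - (t * a k + th m)\<bar> \<le> pi" if "j \<in> I" "k \<in> I" for j k
        using assms(3)[of j k] that by (simp add: I_def algebra_simps)
      have "(\<Sum>j\<in>I. \<Sum>k\<in>I. ((t * a j + th m) - (t * a k + th m))\<^sup>2) / (real (card I) * pi\<^sup>2)
           \<le> (\<Sum>j\<in>I. 1 - cos (t * a j + th m))"
        by (rule cos_sum_bound[OF fI Ine bd])
      moreover have "(\<Sum>j\<in>I. \<Sum>k\<in>I. ((t * a j + th m) - (t * a k + th m))\<^sup>2) = t\<^sup>2 * (\<Sum>j\<in>I. \<Sum>k\<in>I. (a j - a k)\<^sup>2)"
        by (simp add: sum_distrib_left power2_eq_square algebra_simps)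
      moreover have "(\<Sum>j\<in>I. \<Sum>k\<in>I. (a j - a k)\<^sup>2) = 2 * real n * V"
        using pair_var[OF fI, of a] by (simp add: V_def mu_def cI)
      ultimately have "2 * t\<^sup>2 * V / pi\<^sup>2 \<le> (\<Sum>j\<in>I. 1 - cos (t * a j + th m))"
        using n0 cI by (simp add: field_simps)
      then have "p * (1 - p) * (2 * t\<^sup>2 * V / pi\<^sup>2) \<le> p * (1 - p) * (\<Sum>j\<in>I. 1 - cos (t * a j + th m))"
        using p01 by (intro mult_left_mono) auto
      moreover have "c = p * (1 - p) * (2 * t\<^sup>2 * V / pi\<^sup>2)" by (simp add: c_def algebra_simps)
      ultimately show ?thesis by simp
    qed
    finally show ?thesis .
  qed
  have F: "(\<Sum>m\<in>{0..n}. cis (- th m * real s) *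
           (\<Prod>j\<in>I. complex_of_real (1 - p) + complex_of_real p * cis (t * a j + th m)))
       = of_nat (Suc n) * complex_of_real P * \<Sigma>"
    unfolding th_def \<Sigma>_def \<A>_def P_def using fourier[OF fI cI[symmetric] assms(2), of p t a] by simp
  have "real (Suc n) * P * cmod \<Sigma> = cmod (of_nat (Suc n) * complex_of_real P * \<Sigma>)"
    using Ppos by (simp add: norm_mult del: of_nat_Suc)
  also have "\<dots> \<le> (\<Sum>m\<in>{0..n}. cmod (cis (- th m * real s) *
           (\<Prod>j\<in>I. complex_of_real (1 - p) + complex_of_real p * cis (t * a j + th m))))"
    unfolding F[symmetric] by (rule norm_sum)
  also have "\<dots> \<le> (\<Sum>m\<in>{0..n}. exp (- c))"
    by (intro sum_mono) (simp only: norm_mult norm_cis mult_1_left prodb)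
  also have "\<dots> = real (Suc n) * exp (- c)" by simp
  finally have key: "P * cmod \<Sigma> \<le> exp (- c)" by (simp add: mult.assoc del: of_nat_Suc)
  have "cmod (\<Sigma> / of_nat N) = cmod \<Sigma> / real N" by (simp add: norm_divide)
  also have "\<dots> = (P * cmod \<Sigma>) / (real N * P)" using Ppos by simp
  also have "\<dots> \<le> exp (- c) / (1 / real (Suc n))"
    using key NP Ppos by (intro frac_le) auto
  also have "\<dots> = real (n + 1) * exp (- c)" by simp
  finally have main: "cmod (\<Sigma> / of_nat N) \<le> real (n + 1) * exp (- c)" .
  have cc: "- c = - 2 * p * (1 - p) * t\<^sup>2 * (V / real n) * real n / pi\<^sup>2"
    using n0 by (simp add: c_def field_simps)
  show ?thesis
    unfolding Let_def p_def[symmetric] E Var using main cc by simp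
qed

end
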